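(* Let $d\ge 1$ be an integer and let $m=d^d\cdot d^3$. Then $HG(B_{d,m})\ge q$, where $q=d^d/d^2=d^{d-2}$.
   Context: The book graph $B_{d,m}$ is obtained from a complete graph on $d$ vertices (the central clique) by adding an independent set of $m$ new vertices (the outer vertices) and joining each of them to all $d$ vertices of the central clique. The hat guessing game on a finite simple graph $G$ with $q$ colors: each vertex (player) is assigned a hat whose color is an arbitrary element of a fixed set $Q$ of $q$ colors. Each player sees the hat colors of exactly its neighbors in $G$ (not its own). Before the colors are assigned, the players fix a deterministic guessing strategy: for each vertex $w$, a function from the colorings of the neighbors of $w$ to $Q$, which is $w$'s guess for its own color. No communication is allowed. The strategy is winning if for every assignment of colors from $Q$ to all vertices, at least one vertex guesses its own color correctly. The hat guessing number $HG(G)$ is the largest integer $q$ for which a winning strategy with $q$ colors exists. *)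

theory Defs
  imports Main
begin

text \<open>A finite simple graph is given by a vertex set V and a symmetric irreflexive
adjacency relation E (only its restriction to V matters).\<close>

definition hat_winning :: "'a set \<Rightarrow> ('a \<Rightarrow> 'a \<Rightarrow> bool) \<Rightarrow> nat \<Rightarrow> bool" where
  "hat_winning V E q \<longleftrightarrow>
     (\<exists>f :: 'a \<Rightarrow> ('a \<Rightarrow> nat) \<Rightarrow> nat.
        (\<forall>v\<in>V. \<forall>c c'. (\<forall>u\<in>V. E v u \<longrightarrow> c u = c' u) \<longrightarrow> f v c = f v c') \<and>
        (\<forall>v\<in>V. \<forall>c. f v c < q) \<and>
        (\<forall>c. (\<forall>v\<in>V. c v < q) \<longrightarrow> (\<exists>v\<in>V. f v c = c v)))"

definition HG :: "'a set \<Rightarrow> ('a \<Rightarrow> 'a \<Rightarrow> bool) \<Rightarrow> nat" where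
  "HG V E = (GREATEST q. hat_winning V E q)"

text \<open>Book graph B_{d,m}: central clique Inl 0..Inl (d-1), outer vertices Inr 0..Inr (m-1).\<close>
definition book_vertices :: "nat \<Rightarrow> nat \<Rightarrow> (nat + nat) set" where
  "book_vertices d m = Inl ` {..<d} \<union> Inr ` {..<m}"

fun book_adj :: "(nat + nat) \<Rightarrow> (nat + nat) \<Rightarrow> bool" where
  "book_adj (Inl i) (Inl j) = (i \<noteq> j)"
| "book_adj (Inl i) (Inr j) = True"
| "book_adj (Inr i) (Inl j) = True"
| "book_adj (Inr i) (Inr j) = False"

end

theory Submission
  imports Defs "HOL-Library.FuncSet" Complex_Main
begin


lemma hall:
  fixes S :: "'a set" and A :: "'a \<Rightarrow> 'b set"
  assumes "finite S" "\<forall>x\<in>S. finite (A x)"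
    and "\<forall>T\<subseteq>S. card T \<le> card (\<Union>(A ` T))"
  shows "\<exists>f. (\<forall>x\<in>S. f x \<in> A x) \<and> inj_on f S"
  using assms
proof (induction "card S" arbitrary: S A rule: less_induct)
  case less
  note IH = less.hyps
  have finU: "\<And>T. T \<subseteq> S \<Longrightarrow> finite (\<Union>(A ` T))"
    using less.prems(1,2) by (meson finite_UN_I finite_subset subsetD)
  show ?case
  proof (cases "S = {}")
    case True then show ?thesis by auto
  next
    case nonempty: False
    show ?thesis
    proof (cases "\<exists>T. T \<subseteq> S \<and> T \<noteq> {} \<and> T \<noteq> S \<and> card T = card (\<Union>(A ` T))")
      case False
      then have strict: "\<And>T. T \<subseteq> S \<Longrightarrow> T \<noteq> {} \<Longrightarrow> T \<noteq> S \<Longrightarrow> card T < card (\<Union>(A ` T))"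
        using less.prems(3) le_neq_implies_less by blast
      from nonempty obtain x where x: "x \<in> S" by auto
      have "card {x} \<le> card (\<Union>(A ` {x}))" using less.prems(3) x by blast
      then have "card {x} \<le> card (A x)" by simp
      then have "A x \<noteq> {}" by auto
      then obtain e where e: "e \<in> A x" by auto
      define A' where "A' = (\<lambda>y. A y - {e})"
      have "card (S - {x}) < card S" using x less.prems(1) by (metis card_Diff1_less)
      moreover have "finite (S - {x})" using less.prems(1) by auto
      moreover have "\<forall>y\<in>S - {x}. finite (A' y)" using less.prems(2) by (auto simp: A'_def)
      moreover have "\<forall>T\<subseteq>S - {x}. card T \<le> card (\<Union>(A' ` T))"
      proof (intro allI impI)
        fix T assume T: "T \<subseteq> S - {x}"
        show "card T \<le> card (\<Union>(A' ` T))"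
        proof (cases "T = {}")
          case True then show ?thesis by simp
        next
          case False
          have "card T < card (\<Union>(A ` T))" using strict[of T] T False x by auto
          moreover have "\<Union>(A' ` T) = \<Union>(A ` T) - {e}" by (auto simp: A'_def)
          moreover have "card (\<Union>(A ` T) - {e}) \<ge> card (\<Union>(A ` T)) - 1"
            by (metis card_Diff_singleton_if diff_le_self dual_order.refl)
          ultimately have "card T \<le> card (\<Union>(A ` T) - {e})" by linarith
          then show ?thesis using \<open>\<Union>(A' ` T) = \<Union>(A ` T) - {e}\<close> by simp
        qed
      qed
      ultimately obtain f where f: "\<forall>y\<in>S - {x}. f y \<in> A' y" "inj_on f (S - {x})"
        using IH by blast
      define g where "g = f(x := e)"
      have "\<forall>y\<in>S. g y \<in> A y" using f(1) e by (auto simp: g_def A'_def)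
      moreover have "inj_on g S"
      proof -
        have "inj_on g (S - {x})" using f(2) by (auto simp: g_def inj_on_def)
        moreover have "g x \<notin> g ` (S - {x})" using f(1) by (auto simp: g_def A'_def)
        ultimately have "inj_on g (insert x (S - {x}))" by (simp only: inj_on_insert) simp
        moreover have "insert x (S - {x}) = S" using x by blast
        ultimately show ?thesis by simp
      qed
      ultimately show ?thesis by blast
    next
      case True
      then obtain T where T: "T \<subseteq> S" "T \<noteq> {}" "T \<noteq> S" "card T = card (\<Union>(A ` T))" by blast
      have finT: "finite T" using T(1) less.prems(1) finite_subset by blast
      have "card T < card S" using T less.prems(1) by (meson psubsetI psubset_card_mono)
      moreover have "\<forall>y\<in>T. finite (A y)" using less.prems(2) T(1) by auto
      moreover have "\<forall>R\<subseteq>T. card R \<le> card (\<Union>(A ` R))" using less.prems(3) T(1) by auto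
      ultimately obtain f1 where f1: "\<forall>y\<in>T. f1 y \<in> A y" "inj_on f1 T"
        using IH finT by blast
      define W where "W = \<Union>(A ` T)"
      define A' where "A' = (\<lambda>y. A y - W)"
      have finW: "finite W" using finU[OF T(1)] by (simp add: W_def)
      have "card (S - T) < card S" using T less.prems(1)
        by (metis Diff_empty Diff_subset card_Diff_subset card_gt_0_iff diff_less finite_subset subset_empty)
      moreover have "finite (S - T)" using less.prems(1) by auto
      moreover have "\<forall>y\<in>S - T. finite (A' y)" using less.prems(2) by (auto simp: A'_def)
      moreover have "\<forall>R\<subseteq>S - T. card R \<le> card (\<Union>(A' ` R))"
      proof (intro allI impI)
        fix R assume R: "R \<subseteq> S - T"
        have finR: "finite R" using R less.prems(1) finite_subset by blast
        have eq: "\<Union>(A' ` R) = \<Union>(A ` (R \<union> T)) - W" by (auto simp: A'_def W_def)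
        have sub: "W \<subseteq> \<Union>(A ` (R \<union> T))" by (auto simp: W_def)
        have "card (\<Union>(A' ` R)) = card (\<Union>(A ` (R \<union> T))) - card W"
          unfolding eq using sub finW by (simp add: card_Diff_subset)
        moreover have "card (R \<union> T) \<le> card (\<Union>(A ` (R \<union> T)))"
          using less.prems(3) R T(1) by (metis Diff_subset Un_subset_iff order_trans)
        moreover have "card (R \<union> T) = card R + card T"
          using R finR finT by (subst card_Un_disjoint) auto
        moreover have "card W = card T" using T(4) by (simp add: W_def)
        ultimately show "card R \<le> card (\<Union>(A' ` R))" by linarith
      qed
      ultimately obtain f2 where f2: "\<forall>y\<in>S - T. f2 y \<in> A' y" "inj_on f2 (S - T)"
        using IH by blast
      define g where "g = (\<lambda>y. if y \<in> T then f1 y else f2 y)"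
      have "\<forall>y\<in>S. g y \<in> A y" using f1(1) f2(1) by (auto simp: g_def A'_def)
      moreover have "inj_on g S"
      proof (rule inj_onI)
        fix a b assume ab: "a \<in> S" "b \<in> S" "g a = g b"
        show "a = b"
        proof (cases "a \<in> T"; cases "b \<in> T")
          assume "a \<in> T" "b \<in> T" then show ?thesis using ab f1(2) by (auto simp: g_def inj_on_def)
        next
          assume "a \<notin> T" "b \<notin> T" then show ?thesis using ab f2(2) by (auto simp: g_def inj_on_def)
        next
          assume a: "a \<in> T" "b \<notin> T"
          have "g a \<in> W" using f1(1) a by (auto simp: g_def W_def)
          moreover have "g b \<notin> W" using f2(1) a ab(2) by (auto simp: g_def A'_def)
          ultimately show ?thesis using ab by simp
        next
          assume a: "a \<notin> T" "b \<in> T"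
          have "g b \<in> W" using f1(1) a by (auto simp: g_def W_def)
          moreover have "g a \<notin> W" using f2(1) a ab(1) by (auto simp: g_def A'_def)
          ultimately show ?thesis using ab by simp
        qed
      qed
      ultimately show ?thesis by blast
    qed
  qed
qed




lemma key_ineq:
  fixes N k k' :: real and d :: nat
  assumes N: "0 \<le> N" and k: "0 < k" and k': "0 < k'" and Nk: "N \<le> k ^ (Suc d)"
  shows "(Suc d) * N / k \<le> k' ^ d + d * N / k'"
proof -
  define u where "u = k' / k"
  have u: "0 < u" using k k' by (simp add: u_def)
  have kk: "1 / k = u / k'" using k k' by (simp add: u_def)
  have lhs: "(Suc d) * N / k - d * N / k' = (N / k') * ((Suc d) * u - d)"
    using k k' by (simp add: u_def field_simps)
  have bern: "1 + real (Suc d) * (u - 1) \<le> u ^ Suc d"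
    using Bernoulli_inequality[of "u - 1" "Suc d"] u by simp
  show ?thesis
  proof (cases "(Suc d) * u - d \<le> 0")
    case True
    then have "(N / k') * ((Suc d) * u - d) \<le> 0"
      using N k' True by (intro mult_nonneg_nonpos) auto
    moreover have "0 \<le> k' ^ d" using k' by simp
    ultimately show ?thesis using lhs by linarith
  next
    case False
    have "(N / k') * ((Suc d) * u - d) \<le> (k ^ Suc d / k') * ((Suc d) * u - d)"
      using False Nk k' by (intro mult_right_mono divide_right_mono) auto
    also have "\<dots> \<le> (k ^ Suc d / k') * u ^ Suc d"
      using bern k k' by (intro mult_left_mono) (auto simp: algebra_simps)
    also have "\<dots> = k' ^ d"
      using k k' by (simp add: u_def power_divide field_simps)
    finally show ?thesis using lhs by linarith
  qed
qed




definition rem :: "nat \<Rightarrow> 'a list \<Rightarrow> 'a list" where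
  "rem i xs = take i xs @ drop (Suc i) xs"

definition lines :: "nat \<Rightarrow> 'a list set \<Rightarrow> (nat \<times> 'a list) set" where
  "lines d T = (\<Union>x\<in>T. (\<lambda>i. (i, rem i x)) ` {..<d})"

lemma rem_0_Cons[simp]: "rem 0 (c # x) = x" by (simp add: rem_def)
lemma rem_Suc_Cons[simp]: "rem (Suc i) (c # x) = c # rem i x" by (simp add: rem_def)

lemma finite_lines: "finite T \<Longrightarrow> finite (lines d T)"
  by (simp add: lines_def)

definition slice :: "'a \<Rightarrow> 'a list set \<Rightarrow> 'a list set" where
  "slice c T = {x. c # x \<in> T}"

lemma slice_sub: "slice c T \<subseteq> tl ` T"
  unfolding slice_def by (force)

lemma lines_Suc:
  assumes "\<forall>x\<in>T. length x = Suc d"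
  shows "lines (Suc d) T = ((\<lambda>z. (0::nat, z)) ` (tl ` T)) \<union>
     (\<Union>c\<in>hd ` T. (\<lambda>(i, z). (Suc i, c # z)) ` lines d (slice c T))"
proof (rule set_eqI)
  fix p :: "nat \<times> 'a list"
  show "p \<in> lines (Suc d) T \<longleftrightarrow> p \<in> ((\<lambda>z. (0::nat, z)) ` (tl ` T)) \<union>
     (\<Union>c\<in>hd ` T. (\<lambda>(i, z). (Suc i, c # z)) ` lines d (slice c T))"
  proof
    assume "p \<in> lines (Suc d) T"
    then obtain x i where xi: "x \<in> T" "i < Suc d" "p = (i, rem i x)" by (auto simp: lines_def)
    obtain c x' where x: "x = c # x'" using assms xi(1) by (cases x) auto
    show "p \<in> ((\<lambda>z. (0::nat, z)) ` (tl ` T)) \<union>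
     (\<Union>c\<in>hd ` T. (\<lambda>(i, z). (Suc i, c # z)) ` lines d (slice c T))"
    proof (cases i)
      case 0
      then have "p = (0, tl x)" using xi x by simp
      then have "p \<in> (\<lambda>z. (0::nat, z)) ` (tl ` T)" using xi(1) by blast
      then show ?thesis by (rule UnI1)
    next
      case (Suc j)
      have "(j, rem j x') \<in> lines d (slice c T)"
        using xi x Suc by (auto simp: lines_def slice_def)
      moreover have "c \<in> hd ` T" using xi x by (metis list.sel(1) image_eqI)
      moreover have "p = (\<lambda>(i, z). (Suc i, c # z)) (j, rem j x')" using xi x Suc by simp
      ultimately show ?thesis by blast
    qed
  next
    assume "p \<in> ((\<lambda>z. (0::nat, z)) ` (tl ` T)) \<union>
     (\<Union>c\<in>hd ` T. (\<lambda>(i, z). (Suc i, c # z)) ` lines d (slice c T))"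
    then show "p \<in> lines (Suc d) T"
    proof
      assume "p \<in> (\<lambda>z. (0::nat, z)) ` (tl ` T)"
      then obtain x where x: "x \<in> T" "p = (0, tl x)" by auto
      obtain c x' where "x = c # x'" using assms x(1) by (cases x) auto
      then show ?thesis using x by (force simp: lines_def)
    next
      assume "p \<in> (\<Union>c\<in>hd ` T. (\<lambda>(i, z). (Suc i, c # z)) ` lines d (slice c T))"
      then obtain c i x' where "c # x' \<in> T" "i < d" "p = (Suc i, c # rem i x')"
        by (auto simp: lines_def slice_def)
      then show ?thesis unfolding lines_def
        by (intro UN_I[of "c # x'"]) (auto intro!: image_eqI[of _ _ "Suc i"])
    qed
  qed
qed

lemma card_lines_Suc:
  assumes "\<forall>x\<in>T. length x = Suc d" "finite T"
  shows "card (lines (Suc d) T) = card (tl ` T) + (\<Sum>c\<in>hd ` T. card (lines d (slice c T)))"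
proof -
  have fs: "\<And>c. finite (slice c T)" using assms(2) slice_sub finite_subset by (metis finite_imageI)
  have inj: "\<And>c. inj_on (\<lambda>(i, z). (Suc i, c # z)) X" for X :: "(nat \<times> 'a list) set"
    by (auto simp: inj_on_def)
  have c1: "card ((\<Union>c\<in>hd ` T. (\<lambda>(i, z). (Suc i, c # z)) ` lines d (slice c T)))
      = (\<Sum>c\<in>hd ` T. card ((\<lambda>(i, z). (Suc i, c # z)) ` lines d (slice c T)))"
    by (rule card_UN_disjoint) (auto simp: assms(2) finite_lines fs)
  also have "\<dots> = (\<Sum>c\<in>hd ` T. card (lines d (slice c T)))"
    by (intro sum.cong refl card_image inj)
  finally have c1': "card ((\<Union>c\<in>hd ` T. (\<lambda>(i, z). (Suc i, c # z)) ` lines d (slice c T)))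
      = (\<Sum>c\<in>hd ` T. card (lines d (slice c T)))" .
  have "card (lines (Suc d) T) = card ((\<lambda>z. (0::nat, z)) ` (tl ` T)) +
     card (\<Union>c\<in>hd ` T. (\<lambda>(i, z). (Suc i, c # z)) ` lines d (slice c T))"
    unfolding lines_Suc[OF assms(1)]
    by (rule card_Un_disjoint) (auto simp: assms(2) finite_lines fs)
  also have "card ((\<lambda>z. (0::nat, z)) ` (tl ` T)) = card (tl ` T)"
    by (rule card_image) (auto simp: inj_on_def)
  finally show ?thesis using c1' by simp
qed

lemma card_slices:
  assumes "\<forall>x\<in>T. length x = Suc d" "finite T"
  shows "card T = (\<Sum>c\<in>hd ` T. card (slice c T))"
proof -
  have fs: "\<And>c. finite (slice c T)" using assms(2) slice_sub finite_subset by (metis finite_imageI)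
  have "T = (\<Union>c\<in>hd ` T. (Cons c) ` slice c T)"
  proof (rule set_eqI, rule iffI)
    fix x assume "x \<in> T"
    moreover obtain c x' where "x = c # x'" using assms(1) \<open>x \<in> T\<close> by (cases x) auto
    ultimately show "x \<in> (\<Union>c\<in>hd ` T. (Cons c) ` slice c T)" by (force simp: slice_def)
  qed (auto simp: slice_def)
  then have "card T = card (\<Union>c\<in>hd ` T. (Cons c) ` slice c T)" by simp
  also have "\<dots> = (\<Sum>c\<in>hd ` T. card ((Cons c) ` slice c T))"
    by (rule card_UN_disjoint) (auto simp: assms(2) fs)
  also have "\<dots> = (\<Sum>c\<in>hd ` T. card (slice c T))"
    by (intro sum.cong refl card_image) auto
  finally show ?thesis .
qed

lemma LW:
  fixes T :: "'a list set" and k :: real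
  assumes "1 \<le> d" "finite T" "\<forall>x\<in>T. length x = d" "0 < k" "real (card T) \<le> k ^ d"
  shows "real d * card T / k \<le> card (lines d T)"
  using assms
proof (induction d arbitrary: T k)
  case 0 then show ?case by simp
next
  case (Suc d)
  show ?case
  proof (cases "T = {}")
    case True then show ?thesis by simp
  next
    case Tne: False
    show ?thesis
    proof (cases "d = 0")
      case True
      then have "lines (Suc d) T = {(0, [])}" using Suc.prems(3) Tne
        by (auto simp: lines_def rem_def)
      then show ?thesis using True Suc.prems(4,5) by simp
    next
      case False
      define M where "M = card (tl ` T)"
      have Mpos: "0 < M" using Tne Suc.prems(2) by (simp add: M_def card_gt_0_iff)
      define k' where "k' = root d (real M)"
      have k'pos: "0 < k'" using Mpos False by (simp add: k'_def)
      have k'M: "k' ^ d = real M" using Mpos False by (simp add: k'_def)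
      have fs: "\<And>c. finite (slice c T)" using Suc.prems(2) slice_sub finite_subset by (metis finite_imageI)
      have IHc: "real d * card (slice c T) / k' \<le> card (lines d (slice c T))" for c
      proof (rule Suc.IH)
        show "1 \<le> d" using False by simp
        show "finite (slice c T)" by (rule fs)
        show "\<forall>x\<in>slice c T. length x = d" using Suc.prems(3) by (auto simp: slice_def)
        show "0 < k'" by (rule k'pos)
        have "card (slice c T) \<le> M" unfolding M_def
          by (rule card_mono) (auto simp: Suc.prems(2) slice_sub)
        then show "real (card (slice c T)) \<le> k' ^ d" using k'M by simp
      qed
      have N: "real (card T) = (\<Sum>c\<in>hd ` T. real (card (slice c T)))"
        using card_slices[OF Suc.prems(3,2)] by simp
      have "real (Suc d) * card T / k \<le> k' ^ d + real d * card T / k'"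
        by (rule key_ineq) (use Suc.prems k'pos in auto)
      also have "real d * card T / k' = (\<Sum>c\<in>hd ` T. real d * card (slice c T) / k')"
        unfolding N by (simp add: sum_divide_distrib sum_distrib_left)
      also have "\<dots> \<le> (\<Sum>c\<in>hd ` T. real (card (lines d (slice c T))))"
        by (rule sum_mono) (rule IHc)
      also have "k' ^ d + (\<Sum>c\<in>hd ` T. real (card (lines d (slice c T)))) = card (lines (Suc d) T)"
        using card_lines_Suc[OF Suc.prems(3,2)] k'M M_def by simp
      finally show ?thesis by simp
    qed
  qed
qed

lemma hall_cond_small:
  fixes T :: "'a list set"
  assumes "1 \<le> d" "finite T" "\<forall>x\<in>T. length x = d" "card T \<le> d ^ d"
  shows "card T \<le> card (lines d T)"
proof -
  have "real d * card T / real d \<le> card (lines d T)"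
  proof (rule LW)
    show "real (card T) \<le> real d ^ d" using assms(4) by (metis of_nat_le_iff of_nat_power)
  qed (use assms in auto)
  then show ?thesis using assms(1) by simp
qed




lemma poly_ineq: "(e::nat) * ((e+2)*(D+1) + D*(e+2)^3) < (D+1)*(e+2)^4"
  by (simp add: eval_nat_numeral algebra_simps)

lemma bern_nat:
  assumes "(1::nat) \<le> n"
  shows "2 * n ^ (Suc n) \<le> (Suc n) ^ (Suc n)"
proof -
  have n: "(0::real) < n" using assms by simp
  have "1 + real (Suc n) * (1 / n) \<le> (1 + 1 / n) ^ Suc n"
  proof (rule Bernoulli_inequality)
    have "0 \<le> 1 / real n" by simp
    then show "- 1 \<le> 1 / real n" by linarith
  qed
  moreover have "2 \<le> 1 + real (Suc n) * (1 / n)" using n by (simp add: field_simps)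
  ultimately have "2 \<le> (1 + 1 / real n) ^ Suc n" by linarith
  also have "(1 + 1 / real n) = real (Suc n) / n" using n by (simp add: field_simps)
  finally have "2 * real n ^ Suc n \<le> real (Suc n) ^ Suc n"
    using n by (simp add: power_divide field_simps)
  then have "real (2 * n ^ Suc n) \<le> real (Suc n ^ Suc n)" by (simp only: of_nat_mult of_nat_power of_nat_numeral)
  then show ?thesis by (simp only: of_nat_le_iff)
qed


lemma count_ineq:
  fixes e :: nat
  defines "d \<equiv> e + 2"
  defines "q \<equiv> d ^ e"
  defines "N \<equiv> d ^ d + 1"
  defines "m \<equiv> d ^ d * d ^ 3"
  assumes e: "2 \<le> e"
  shows "q ^ (d * N + m) * (q - 1) ^ (N * m) < q ^ (N * m)"
proof -
  have d4: "4 \<le> d" using e by (simp add: d_def)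
  have "d ^ 1 \<le> d ^ e" using e d4 by (intro power_increasing) auto
  then have q2: "2 \<le> q" using d4 by (simp add: q_def)
  have dd: "d ^ d = q * d ^ 2" unfolding q_def by (metis d_def power_add)
  have mq: "m = q * d ^ 5" by (simp add: m_def dd power_add[symmetric] mult.assoc)
  have Nm: "N * m = q * (N * d ^ 5)" by (simp add: mq)
  have b: "2 * (q - 1) ^ q \<le> q ^ q"
    using bern_nat[of "q - 1"] q2 by (simp add: Suc_diff_1)
  have "2 ^ (N * d ^ 5) * (q - 1) ^ (N * m) = (2 * (q - 1) ^ q) ^ (N * d ^ 5)"
    by (simp add: Nm power_mult power_mult_distrib)
  also have "\<dots> \<le> (q ^ q) ^ (N * d ^ 5)" by (rule power_mono[OF b]) simp
  also have "\<dots> = q ^ (N * m)" by (simp add: Nm power_mult)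
  finally have A: "2 ^ (N * d ^ 5) * (q - 1) ^ (N * m) \<le> q ^ (N * m)" .
  have "d < 2 ^ d" by (rule less_exp)
  then have "q \<le> (2 ^ d) ^ e" unfolding q_def by (intro power_mono) auto
  then have qle: "q \<le> 2 ^ (d * e)" by (simp add: power_mult)
  have pi: "e * (d * (d ^ d + 1) + d ^ d * d ^ 3) < (d ^ d + 1) * d ^ 4"
    using poly_ineq[of e "d ^ d"] by (simp add: d_def)
  have "q ^ (d * N + m) \<le> (2 ^ (d * e)) ^ (d * N + m)" by (rule power_mono[OF qle]) simp
  also have "\<dots> = 2 ^ (d * e * (d * N + m))" by (simp add: power_mult)
  also have "\<dots> < 2 ^ (N * d ^ 5)"
  proof (rule power_strict_increasing)
    have "d * e * (d * N + m) = d * (e * (d * (d ^ d + 1) + d ^ d * d ^ 3))"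
      by (simp add: N_def m_def algebra_simps)
    also have "\<dots> < d * ((d ^ d + 1) * d ^ 4)" using pi d4 by simp
    also have "\<dots> = N * d ^ 5" by (simp add: N_def algebra_simps eval_nat_numeral)
    finally show "d * e * (d * N + m) < N * d ^ 5" .
  qed simp
  finally have B: "q ^ (d * N + m) < 2 ^ (N * d ^ 5)" .
  have pos: "0 < (q - 1) ^ (N * m)" using q2 by simp
  have "q ^ (d * N + m) * (q - 1) ^ (N * m) < 2 ^ (N * d ^ 5) * (q - 1) ^ (N * m)"
    using B pos by simp
  with A show ?thesis by linarith
qed




lemma family_exists:
  fixes q N m d :: nat
  assumes q1: "1 \<le> q" and ineq: "q ^ (d * N + m) * (q - 1) ^ (N * m) < q ^ (N * m)"
  shows "\<exists>G :: nat \<Rightarrow> nat list \<Rightarrow> nat. \<forall>T. T \<subseteq> {xs. set xs \<subseteq> {..<q} \<and> length xs = d} \<and> card T = N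
            \<longrightarrow> (\<exists>j<m. {..<q} \<subseteq> G j ` T)"
proof (rule ccontr)
  define U where "U = {xs. set xs \<subseteq> {..<q} \<and> length xs = d}"
  define X where "X = q ^ d"
  have finU: "finite U" unfolding U_def by (rule finite_lists_length_eq) simp
  have cardU: "card U = X" unfolding U_def X_def by (simp add: card_lists_length_eq)
  define Fs where "Fs = PiE {..<m} (\<lambda>_. PiE U (\<lambda>_. {..<q}))"
  define Ts where "Ts = {T. T \<subseteq> U \<and> card T = N}"
  define B where "B = (\<lambda>T. {g \<in> PiE U (\<lambda>_. {..<q}). \<not> {..<q} \<subseteq> g ` T})"
  define Bad where "Bad = (\<lambda>T. PiE {..<m} (\<lambda>_. B T))"
  assume "\<not> ?thesis"
  note nt = this
  have bad: "\<exists>T. T \<subseteq> U \<and> card T = N \<and> (\<forall>j<m. \<not> {..<q} \<subseteq> G j ` T)" for G :: "nat \<Rightarrow> nat list \<Rightarrow> nat"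
  proof (rule ccontr)
    assume "\<not> (\<exists>T. T \<subseteq> U \<and> card T = N \<and> (\<forall>j<m. \<not> {..<q} \<subseteq> G j ` T))"
    then have "\<forall>T. T \<subseteq> {xs. set xs \<subseteq> {..<q} \<and> length xs = d} \<and> card T = N
            \<longrightarrow> (\<exists>j<m. {..<q} \<subseteq> G j ` T)" unfolding U_def by blast
    then show False using nt by blast
  qed
  have sub: "Fs \<subseteq> (\<Union>T\<in>Ts. Bad T)"
  proof
    fix G assume G: "G \<in> Fs"
    obtain T where T: "T \<subseteq> U" "card T = N" "\<forall>j<m. \<not> {..<q} \<subseteq> G j ` T" using bad[of G] by blast
    have "G \<in> Bad T" using G T(3) unfolding Bad_def B_def Fs_def by (auto simp: PiE_iff)
    then show "G \<in> (\<Union>T\<in>Ts. Bad T)" using T unfolding Ts_def by blast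
  qed
  have finTs: "finite Ts" unfolding Ts_def using finU by simp
  have cardTs: "card Ts = X choose N" unfolding Ts_def using n_subsets[OF finU] cardU by simp
  have cardFs: "card Fs = (q ^ X) ^ m"
    unfolding Fs_def using finU cardU by (simp add: card_PiE)
  have cardB: "card (B T) \<le> q * ((q - 1) ^ N * q ^ (X - N))" if T: "T \<in> Ts" for T
  proof -
    define C where "C = (\<lambda>c. PiE U (\<lambda>x. if x \<in> T then {..<q} - {c} else {..<q}))"
    have TU: "T \<subseteq> U" "card T = N" using T unfolding Ts_def by auto
    have "B T \<subseteq> (\<Union>c\<in>{..<q}. C c)"
    proof
      fix g assume g: "g \<in> B T"
      then obtain c where c: "c < q" "c \<notin> g ` T" unfolding B_def by auto
      have "g \<in> C c" using g c unfolding B_def C_def by (auto simp: PiE_iff)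
      then show "g \<in> (\<Union>c\<in>{..<q}. C c)" using c by blast
    qed
    then have "card (B T) \<le> card (\<Union>c\<in>{..<q}. C c)"
      by (rule card_mono[rotated]) (auto simp: C_def finU intro!: finite_PiE)
    also have "\<dots> \<le> (\<Sum>c\<in>{..<q}. card (C c))" by (rule card_UN_le) simp
    also have "\<dots> = (\<Sum>c\<in>{..<q}. (q - 1) ^ N * q ^ (X - N))"
    proof (rule sum.cong[OF refl])
      fix c assume c: "c \<in> {..<q}"
      have "card (C c) = (\<Prod>x\<in>U. card (if x \<in> T then {..<q} - {c} else {..<q}))"
        unfolding C_def using finU by (simp add: card_PiE)
      also have "\<dots> = (\<Prod>x\<in>U. if x \<in> T then q - 1 else q)"
        using c by (intro prod.cong refl) auto
      also have "\<dots> = (\<Prod>x\<in>U \<inter> {x. x \<in> T}. q - 1) * (\<Prod>x\<in>U \<inter> - {x. x \<in> T}. q)"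
        by (rule prod.If_cases[OF finU])
      also have "U \<inter> {x. x \<in> T} = T" using TU by auto
      also have "U \<inter> - {x. x \<in> T} = U - T" by auto
      finally have cc: "card (C c) = (\<Prod>x\<in>T. q - 1) * (\<Prod>x\<in>U - T. q)" .
      have "card (U - T) = X - N" using TU finU cardU by (simp add: card_Diff_subset finite_subset)
      then show "card (C c) = (q - 1) ^ N * q ^ (X - N)" using TU cc by simp
    qed
    also have "\<dots> = q * ((q - 1) ^ N * q ^ (X - N))" by simp
    finally show ?thesis .
  qed
  have "card Fs \<le> card (\<Union>T\<in>Ts. Bad T)"
  proof (rule card_mono[OF _ sub])
    have "finite (B T)" for T unfolding B_def using finU by (intro finite_subset[OF _ finite_PiE[of U "\<lambda>_. {..<q}"]]) auto
    then show "finite (\<Union>T\<in>Ts. Bad T)" using finTs unfolding Bad_def by (intro finite_UN_I finite_PiE) auto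
  qed
  also have "\<dots> \<le> (\<Sum>T\<in>Ts. card (Bad T))" by (rule card_UN_le[OF finTs])
  also have "\<dots> \<le> (\<Sum>T\<in>Ts. (q * ((q - 1) ^ N * q ^ (X - N))) ^ m)"
  proof (rule sum_mono)
    fix T assume T: "T \<in> Ts"
    have "card (Bad T) = card (B T) ^ m" unfolding Bad_def by (simp add: card_PiE)
    also have "\<dots> \<le> (q * ((q - 1) ^ N * q ^ (X - N))) ^ m" by (rule power_mono[OF cardB[OF T]]) simp
    finally show "card (Bad T) \<le> (q * ((q - 1) ^ N * q ^ (X - N))) ^ m" .
  qed
  also have "\<dots> = (X choose N) * (q * ((q - 1) ^ N * q ^ (X - N))) ^ m" using cardTs by simp
  finally have main: "(q ^ X) ^ m \<le> (X choose N) * (q * ((q - 1) ^ N * q ^ (X - N))) ^ m"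
    using cardFs by simp
  show False
  proof (cases "N \<le> X")
    case False
    then have z: "X choose N = 0" by simp
    have "(q ^ X) ^ m \<le> 0" using main by (simp only: z mult_zero_left)
    then show False using q1 by simp
  next
    case True
    have ch: "X choose N \<le> q ^ (d * N)"
    proof -
      have "X choose N \<le> X ^ N" by (rule binomial_le_pow[OF True])
      also have "X ^ N = q ^ (d * N)" unfolding X_def by (rule power_mult[symmetric])
      finally show ?thesis .
    qed
    have Xm: "X * m = N * m + (X - N) * m" using True by (metis add_mult_distrib le_add_diff_inverse)
    have "(q ^ X) ^ m = q ^ (N * m) * q ^ ((X - N) * m)"
      by (simp only: power_mult[symmetric] Xm power_add)
    moreover have "(X choose N) * (q * ((q - 1) ^ N * q ^ (X - N))) ^ m
        \<le> q ^ (d * N) * (q ^ m * (q - 1) ^ (N * m) * q ^ ((X - N) * m))"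
    proof -
      have "(q * ((q - 1) ^ N * q ^ (X - N))) ^ m = q ^ m * (q - 1) ^ (N * m) * q ^ ((X - N) * m)"
        by (simp only: power_mult_distrib power_mult mult.assoc)
      then show ?thesis using ch by (simp only:) (rule mult_right_mono, simp_all)
    qed
    moreover have "q ^ (d * N) * (q ^ m * (q - 1) ^ (N * m) * q ^ ((X - N) * m))
        = (q ^ (d * N + m) * (q - 1) ^ (N * m)) * q ^ ((X - N) * m)"
      by (simp only: power_add mult.assoc)
    moreover have "(q ^ (d * N + m) * (q - 1) ^ (N * m)) * q ^ ((X - N) * m) < q ^ (N * m) * q ^ ((X - N) * m)"
      using ineq q1 by (intro mult_strict_right_mono) simp_all
    ultimately show False using main by linarith
  qed
qed




lemma cover:
  fixes S :: "nat list set"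
  assumes "1 \<le> d" "finite S" "\<forall>x\<in>S. length x = d" "card S \<le> d ^ d"
  shows "\<exists>a. (\<forall>x\<in>S. \<exists>i<d. a x = (i, rem i x)) \<and> inj_on a S"
proof -
  have "\<exists>a. (\<forall>x\<in>S. a x \<in> (\<lambda>i. (i, rem i x)) ` {..<d}) \<and> inj_on a S"
  proof (rule hall)
    show "finite S" by (rule assms(2))
    show "\<forall>x\<in>S. finite ((\<lambda>i. (i, rem i x)) ` {..<d})" by simp
    show "\<forall>T\<subseteq>S. card T \<le> card (\<Union>x\<in>T. (\<lambda>i. (i, rem i x)) ` {..<d})"
    proof (intro allI impI)
      fix T assume T: "T \<subseteq> S"
      have "card T \<le> card (lines d T)"
      proof (rule hall_cond_small)
        show "finite T" using T assms(2) finite_subset by blast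
        show "card T \<le> d ^ d" using card_mono[OF assms(2) T] assms(4) by linarith
      qed (use assms T in auto)
      then show "card T \<le> card (\<Union>x\<in>T. (\<lambda>i. (i, rem i x)) ` {..<d})" by (simp add: lines_def)
    qed
  qed
  then show ?thesis by blast
qed

lemma hw_bound:
  fixes V :: "'a set"
  assumes fin: "finite V" and irr: "\<forall>v\<in>V. \<not> E v v" and hw: "hat_winning V E q"
  shows "q \<le> card V"
proof (rule ccontr)
  assume "\<not> q \<le> card V"
  then have qn: "card V < q" by simp
  define n where "n = card V"
  obtain f :: "'a \<Rightarrow> ('a \<Rightarrow> nat) \<Rightarrow> nat" where
    f1: "\<forall>v\<in>V. \<forall>c c'. (\<forall>u\<in>V. E v u \<longrightarrow> c u = c' u) \<longrightarrow> f v c = f v c'" and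
    f3: "\<forall>c. (\<forall>v\<in>V. c v < q) \<longrightarrow> (\<exists>v\<in>V. f v c = c v)"
    using hw unfolding hat_winning_def by blast
  define C where "C = PiE V (\<lambda>_. {..<q})"
  define W where "W = (\<lambda>v. {c \<in> C. f v c = c v})"
  have cardC: "card C = q ^ n" unfolding C_def n_def using fin by (simp add: card_PiE)
  have finC: "finite C" unfolding C_def using fin by (simp add: finite_PiE)
  have sub: "C \<subseteq> (\<Union>v\<in>V. W v)"
  proof
    fix c assume c: "c \<in> C"
    then have "\<forall>v\<in>V. c v < q" unfolding C_def by auto
    then obtain v where "v \<in> V" "f v c = c v" using f3 by blast
    then show "c \<in> (\<Union>v\<in>V. W v)" using c unfolding W_def by blast
  qed
  have cardW: "card (W v) \<le> q ^ (n - 1)" if v: "v \<in> V" for v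
  proof -
    have "inj_on (\<lambda>c. restrict c (V - {v})) (W v)"
    proof (rule inj_onI)
      fix c c' assume c: "c \<in> W v" and c': "c' \<in> W v"
        and eq: "restrict c (V - {v}) = restrict c' (V - {v})"
      have agree: "\<forall>u\<in>V - {v}. c u = c' u" using eq by (metis restrict_apply')
      have "f v c = f v c'" using f1 v agree irr by (metis Diff_iff singletonD)
      then have "c v = c' v" using c c' unfolding W_def by simp
      moreover have "c \<in> C" "c' \<in> C" using c c' unfolding W_def by auto
      ultimately show "c = c'" using agree unfolding C_def
        by (intro PiE_ext[of c V "\<lambda>_. {..<q}" c']) auto
    qed
    moreover have "(\<lambda>c. restrict c (V - {v})) ` (W v) \<subseteq> PiE (V - {v}) (\<lambda>_. {..<q})"
      unfolding W_def C_def by (auto simp: PiE_iff split: if_splits)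
    ultimately have "card (W v) \<le> card (PiE (V - {v}) (\<lambda>_. {..<q}))"
      using fin by (metis card_image card_mono finite_Diff finite_PiE finite_lessThan)
    also have "\<dots> = q ^ (n - 1)" using fin v by (simp add: card_PiE n_def)
    finally show ?thesis .
  qed
  have "q ^ n \<le> card (\<Union>v\<in>V. W v)" unfolding cardC[symmetric]
    by (rule card_mono[OF _ sub]) (use fin finC in \<open>auto simp: W_def\<close>)
  also have "\<dots> \<le> (\<Sum>v\<in>V. card (W v))" by (rule card_UN_le[OF fin])
  also have "\<dots> \<le> (\<Sum>v\<in>V. q ^ (n - 1))" by (rule sum_mono) (rule cardW)
  also have "\<dots> = n * q ^ (n - 1)" by (simp add: n_def)
  finally have le: "q ^ n \<le> n * q ^ (n - 1)" .
  show False
  proof (cases "n = 0")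
    case True then show False using le by simp
  next
    case False
    then have "q ^ n = q * q ^ (n - 1)" by (metis power_eq_if)
    moreover have "0 < q ^ (n - 1)" using qn by simp
    ultimately have "q * q ^ (n - 1) \<le> n * q ^ (n - 1)" using le by simp
    then have "q \<le> n" using \<open>0 < q ^ (n - 1)\<close> mult_le_cancel2 by blast
    then show False using qn n_def by simp
  qed
qed


definition xc :: "nat \<Rightarrow> (nat + nat \<Rightarrow> nat) \<Rightarrow> nat list" where
  "xc d c = map (\<lambda>i. c (Inl i)) [0..<d]"

definition yc :: "nat \<Rightarrow> (nat + nat \<Rightarrow> nat) \<Rightarrow> nat \<Rightarrow> nat" where
  "yc m c = (\<lambda>j. if j < m then c (Inr j) else 0)"

lemma take_upt0: "take i [0..<d] = [0..<min i d]"
  by (cases "i \<le> d") (simp_all add: min_def)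

lemma rem_xc:
  assumes "\<forall>k<d. k \<noteq> i \<longrightarrow> c (Inl k) = c' (Inl k)"
  shows "rem i (xc d c) = rem i (xc d c')"
proof -
  have "take i (xc d c) = take i (xc d c')"
    unfolding xc_def take_map take_upt0 using assms by (intro map_cong) auto
  moreover have "drop (Suc i) (xc d c) = drop (Suc i) (xc d c')"
    unfolding xc_def drop_map using assms by (intro map_cong) auto
  ultimately show ?thesis by (simp add: rem_def)
qed

lemma winning:
  fixes d m q :: nat and G :: "nat \<Rightarrow> nat list \<Rightarrow> nat"
  assumes d: "1 \<le> d" and q: "1 \<le> q"
    and G: "\<forall>T. T \<subseteq> {xs. set xs \<subseteq> {..<q} \<and> length xs = d} \<and> card T = d ^ d + 1
               \<longrightarrow> (\<exists>j<m. {..<q} \<subseteq> G j ` T)"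
  shows "hat_winning (book_vertices d m) book_adj q"
proof -
  define U where "U = {xs. set xs \<subseteq> {..<q} \<and> length xs = d}"
  have finU: "finite U" unfolding U_def by (rule finite_lists_length_eq) simp
  define S where "S = (\<lambda>y. {x \<in> U. \<forall>j<m. G j x \<noteq> y j})"
  have Ssmall: "card (S y) \<le> d ^ d" if y: "\<forall>j<m. y j < q" for y
  proof (rule ccontr)
    assume "\<not> card (S y) \<le> d ^ d"
    then have "d ^ d + 1 \<le> card (S y)" by simp
    then obtain T where T: "T \<subseteq> S y" "card T = d ^ d + 1" by (meson obtain_subset_with_card_n)
    have "T \<subseteq> U" using T(1) unfolding S_def by auto
    then obtain j where j: "j < m" "{..<q} \<subseteq> G j ` T" using G T(2) unfolding U_def by blast
    then obtain x where "x \<in> T" "G j x = y j" using y by (metis image_iff lessThan_iff subsetD)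
    then show False using T(1) j(1) unfolding S_def by blast
  qed
  have cov: "\<exists>a. (\<forall>x\<in>S y. \<exists>i<d. a x = (i, rem i x)) \<and> inj_on a (S y)" if y: "\<forall>j<m. y j < q" for y
  proof (rule cover)
    show "finite (S y)" unfolding S_def using finU by simp
  qed (use d Ssmall[OF y] in \<open>auto simp: S_def U_def\<close>)
  define A where "A = (\<lambda>y. SOME a. (\<forall>x\<in>S y. \<exists>i<d. a x = (i, rem i x)) \<and> inj_on a (S y))"
  have A: "(\<forall>x\<in>S y. \<exists>i<d. A y x = (i, rem i x)) \<and> inj_on (A y) (S y)" if y: "\<forall>j<m. y j < q" for y
    unfolding A_def by (rule someI_ex[OF cov[OF y]])
  define P where "P = (\<lambda>i c p. p \<in> S (yc m c) \<and> A (yc m c) p = (i, rem i p) \<and> rem i p = rem i (xc d c))"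
  define f where "f = (\<lambda>v c. case v of
       Inl i \<Rightarrow> (if \<exists>p. P i c p then (SOME p. P i c p) ! i else 0)
     | Inr j \<Rightarrow> (if G j (xc d c) < q then G j (xc d c) else 0))"
  show ?thesis
    unfolding hat_winning_def
  proof (intro exI[of _ f] conjI ballI allI impI)
    fix v and c c' :: "nat + nat \<Rightarrow> nat"
    assume v: "v \<in> book_vertices d m"
      and agree: "\<forall>u\<in>book_vertices d m. book_adj v u \<longrightarrow> c u = c' u"
    show "f v c = f v c'"
    proof (cases v)
      case (Inl i)
      have i: "i < d" using v Inl by (auto simp: book_vertices_def)
      have "yc m c = yc m c'"
        using agree Inl unfolding yc_def book_vertices_def by (auto intro!: ext)
      moreover have "rem i (xc d c) = rem i (xc d c')"
        by (rule rem_xc) (use agree Inl in \<open>auto simp: book_vertices_def\<close>)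
      ultimately have eq: "P i c = P i c'" unfolding P_def by simp
      show ?thesis unfolding f_def Inl sum.case eq by (rule refl)
    next
      case (Inr j)
      have "xc d c = xc d c'"
        using agree Inr unfolding xc_def book_vertices_def by auto
      then show ?thesis using Inr by (simp add: f_def)
    qed
  next
    fix v and c :: "nat + nat \<Rightarrow> nat" assume v: "v \<in> book_vertices d m"
    show "f v c < q"
    proof (cases v)
      case (Inl i)
      have i: "i < d" using v Inl by (auto simp: book_vertices_def)
      show ?thesis
      proof (cases "\<exists>p. P i c p")
        case True
        then have "P i c (SOME p. P i c p)" by (rule someI_ex)
        then have "(SOME p. P i c p) \<in> U" unfolding P_def S_def by auto
        then have "(SOME p. P i c p) ! i < q" using i unfolding U_def by (auto dest: nth_mem)
        then show ?thesis using Inl True by (simp add: f_def)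
      next
        case False then show ?thesis unfolding f_def Inl sum.case if_not_P[OF False] using q by simp
      qed
    next
      case (Inr j) then show ?thesis using q by (simp add: f_def)
    qed
  next
    fix c :: "nat + nat \<Rightarrow> nat" assume c: "\<forall>v\<in>book_vertices d m. c v < q"
    show "\<exists>v\<in>book_vertices d m. f v c = c v"
    proof (rule ccontr)
      assume nw: "\<not> (\<exists>v\<in>book_vertices d m. f v c = c v)"
      define x where "x = xc d c"
      define y where "y = yc m c"
      have y: "\<forall>j<m. y j < q" using c unfolding y_def yc_def book_vertices_def by auto
      have xU: "x \<in> U" using c unfolding x_def xc_def U_def book_vertices_def by auto
      have "\<forall>j<m. G j x \<noteq> y j"
      proof (intro allI impI)
        fix j assume j: "j < m"
        have jv: "Inr j \<in> book_vertices d m" using j by (simp add: book_vertices_def)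
        have "f (Inr j) c \<noteq> c (Inr j)" using nw jv by blast
        moreover have "c (Inr j) < q" using c jv by blast
        ultimately show "G j x \<noteq> y j" using j unfolding f_def x_def y_def yc_def
          by (auto split: if_splits)
      qed
      then have xS: "x \<in> S y" using xU unfolding S_def by simp
      obtain i where i: "i < d" "A y x = (i, rem i x)" using A[OF y] xS by blast
      have Px: "P i c x" unfolding P_def using xS i by (simp add: x_def y_def)
      have uniq: "p = x" if "P i c p" for p
      proof -
        have pS: "p \<in> S y" and pa: "A y p = (i, rem i p)" and pr: "rem i p = rem i x"
          using that unfolding P_def by (auto simp: x_def y_def)
        have "A y p = A y x" using pa pr i(2) by simp
        then show "p = x" using A[OF y] pS xS by (meson inj_on_def)
      qed
      have "(SOME p. P i c p) = x" using Px uniq by (metis someI_ex)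
      then have "f (Inl i) c = x ! i" using Px by (auto simp: f_def)
      also have "x ! i = c (Inl i)" using i(1) by (simp add: x_def xc_def)
      finally have "f (Inl i) c = c (Inl i)" .
      moreover have "Inl i \<in> book_vertices d m" using i(1) by (simp add: book_vertices_def)
      ultimately show False using nw by blast
    qed
  qed
qed


theorem mainTheorem4:
  fixes d m :: nat
  assumes "d \<ge> 1"
    and "m = d ^ d * d ^ 3"
  shows "d ^ (d - 2) \<le> HG (book_vertices d m) book_adj"
proof -
  define q where "q = d ^ (d - 2)"
  have q1: "1 \<le> q" using assms(1) by (simp add: q_def)
  obtain G :: "nat \<Rightarrow> nat list \<Rightarrow> nat" where
    G: "\<forall>T. T \<subseteq> {xs. set xs \<subseteq> {..<q} \<and> length xs = d} \<and> card T = d ^ d + 1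
               \<longrightarrow> (\<exists>j<m. {..<q} \<subseteq> G j ` T)"
  proof (cases "4 \<le> d")
    case True
    define e where "e = d - 2"
    have de: "d = e + 2" using True by (simp add: e_def)
    have qe: "q = d ^ e" by (simp add: q_def e_def)
    have e2: "2 \<le> e" using True by (simp add: e_def)
    have ci: "(d ^ e) ^ (d * (d ^ d + 1) + d ^ d * d ^ 3) * (d ^ e - 1) ^ ((d ^ d + 1) * (d ^ d * d ^ 3))
       < (d ^ e) ^ ((d ^ d + 1) * (d ^ d * d ^ 3))"
      using count_ineq[of e, OF e2, folded de] .
    have "q ^ (d * (d ^ d + 1) + m) * (q - 1) ^ ((d ^ d + 1) * m) < q ^ ((d ^ d + 1) * m)"
      unfolding assms(2) qe by (rule ci)
    from family_exists[OF q1 this] obtain G' :: "nat \<Rightarrow> nat list \<Rightarrow> nat" where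
      "\<forall>T. T \<subseteq> {xs. set xs \<subseteq> {..<q} \<and> length xs = d} \<and> card T = d ^ d + 1
            \<longrightarrow> (\<exists>j<m. {..<q} \<subseteq> G' j ` T)" by blast
    then show ?thesis by (rule that)
  next
    case False
    have "q ^ d \<le> d ^ d"
    proof -
      have "d = 1 \<or> d = 2 \<or> d = 3" using False assms(1) by linarith
      then show ?thesis by (auto simp: q_def)
    qed
    have "\<forall>T. T \<subseteq> {xs. set xs \<subseteq> {..<q} \<and> length xs = d} \<and> card T = d ^ d + 1
               \<longrightarrow> (\<exists>j<m. {..<q} \<subseteq> (\<lambda>_ _. 0) j ` T)"
    proof (intro allI impI)
      fix T assume T: "T \<subseteq> {xs. set xs \<subseteq> {..<q} \<and> length xs = d} \<and> card T = d ^ d + 1"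
      have "card T \<le> card {xs. set xs \<subseteq> {..<q} \<and> length xs = d}"
        using T by (intro card_mono) (auto intro: finite_lists_length_eq)
      also have "\<dots> = q ^ d" by (simp add: card_lists_length_eq)
      finally show "\<exists>j<m. {..<q} \<subseteq> (\<lambda>_ _. 0) j ` T" using T \<open>q ^ d \<le> d ^ d\<close> by simp
    qed
    then show ?thesis by (rule that)
  qed
  have hw: "hat_winning (book_vertices d m) book_adj q"
    by (rule winning[OF assms(1) q1 G])
  have fin: "finite (book_vertices d m)" by (simp add: book_vertices_def)
  have irr: "\<forall>v\<in>book_vertices d m. \<not> book_adj v v"
  proof
    fix v :: "nat + nat" show "\<not> book_adj v v" by (cases v) auto
  qed
  have "q \<le> (GREATEST q. hat_winning (book_vertices d m) book_adj q)"
    by (rule Greatest_le_nat[where P="\<lambda>q. hat_winning (book_vertices d m) book_adj q", OF hw])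
       (rule hw_bound[where E=book_adj, OF fin irr])
  then show ?thesis by (simp add: q_def HG_def)
qed


end
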